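(* For any set $\Phi\cup\{\psi\}$ of $\mathsf{BSML}$-formulas, if $\Phi\vdash\psi$ in the natural deduction system $\mathcal{S}$ described below, then $\Phi\models\psi$.
   Context: Syntax: $\mathsf{BSML}$-formulas $\phi ::= p \mid \neg\phi \mid (\phi\wedge\phi) \mid (\phi\vee\phi) \mid \Diamond\phi \mid \mathrm{NE}$. Classical formulas ($\alpha,\beta$): the $\mathrm{NE}$-free ones. $\Box\phi:=\neg\Diamond\neg\phi$; $\bot:=p\wedge\neg p$; $\bot\!\!\!\bot:=\bot\wedge\mathrm{NE}$. Semantics on Kripke models $M=(W,R,V)$, states $s\subseteq W$: $s\models p$ iff $s\subseteq V(p)$; $s\dashv p$ iff $s\cap V(p)=\emptyset$; $s\models\mathrm{NE}$ iff $s\ne\emptyset$; $s\dashv\mathrm{NE}$ iff $s=\emptyset$; $s\models\neg\phi$ iff $s\dashv\phi$; $s\dashv\neg\phi$ iff $s\models\phi$; $s\models\phi\wedge\psi$ iff both; $s\dashv\phi\wedge\psi$ iff $s=t\cup u$, $t\dashv\phi$, $u\dashv\psi$; $s\models\phi\vee\psi$ iff $s=t\cup u$, $t\models\phi$, $u\models\psi$; $s\dashv\phi\vee\psi$ iff $s\dashv\phi$ and $s\dashv\psi$; $s\models\Diamond\phi$ iff each $w\in s$ has a nonempty $t\subseteq R[w]$ with $t\models\phi$; $s\dashv\Diamond\phi$ iff $R[w]\dashv\phi$ for all $w\in s$. $\Phi\models\psi$ iff every state supporting all of $\Phi$ supports $\psi$. An occurrence $[\psi]$ of a subformula in $\phi$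 is distributive if it is not within the scope of any $\neg$ or $\Diamond$ in $\phi$ ($\Box=\neg\Diamond\neg$); $\phi[\chi/\psi]$ replaces that occurrence by $\chi$. System $\mathcal{S}$ ($\Phi\vdash\psi$ iff some natural deduction derivation of $\psi$ has all undischarged assumptions in $\Phi$; "$A\Leftrightarrow B$" = both one-step rules): (a) $\wedge$I; $\wedge$E. (b) $\neg$I: from a derivation of $\bot$ from $\alpha$ infer $\neg\alpha$ discharging $\alpha$, provided its undischarged assumptions contain no $\mathrm{NE}$; from $\alpha,\neg\alpha$ infer $\beta$; $\neg\neg\phi\Leftrightarrow\phi$; $\neg(\phi\wedge\psi)\Leftrightarrow\neg\phi\vee\neg\psi$; $\neg(\phi\vee\psi)\Leftrightarrow\neg\phi\wedge\neg\psi$; $\neg\mathrm{NE}\Leftrightarrow\bot$. (c) from $\phi$ infer $\phi\vee\psi$ if $\psi$ contains no $\mathrm{NE}$; from $\phi$ infer $\phi\vee\phi$; from $\phi\vee\psi$ infer $\psi\vee\phi$; $\vee$E: from $\phi\vee\psi$ and derivations of $\chi$ from $\phi$ and from $\psi$ infer $\chi$ (discharging), provided undischarged assumptions of the subderivations contain no $\mathrm{NE}$; from $\phi\vee\psi$ and a derivation of $\chi$ from $\psi$ whose undischarged assumptions contain no $\mathrm{NE}$ infer $\phi\vee\chi$. (d) from $\bot\vee\phi$ infer $\phi$; from $\bot\!\!\!\bot\vee\phi$ infer any $\psi$. (e) if $\psi$ derivable from $\phi$ alone, from $\Diamond\phi$ infer $\Diamond\psi$; if $\psi$ derivable from $\phi_1,\dots,\phi_n$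 alone, from $\Box\phi_1,\dots,\Box\phi_n$ infer $\Box\psi$; $\neg\Diamond\phi\Leftrightarrow\Box\neg\phi$. (f) from $\Diamond(\phi\vee(\psi\wedge\mathrm{NE}))$ infer $\Diamond\psi$; from $\Diamond\phi,\Diamond\psi$ infer $\Diamond(\phi\vee\psi)$; from $\Box(\phi\wedge\mathrm{NE})$ infer $\Diamond\phi$; from $\Box\phi,\Diamond\psi$ infer $\Box(\phi\vee\psi)$. (g) for a distributive occurrence $[\psi]$ in $\phi$: from $\phi$, a derivation of $\chi$ from $\phi[\psi\wedge\mathrm{NE}/\psi]$ and a derivation of $\chi$ from $\phi[\psi\wedge\bot/\psi]$, infer $\chi$ (discharging); from $\Diamond\phi$ infer $\Diamond\phi[\psi\wedge\mathrm{NE}/\psi]\vee\Diamond\phi[\psi\wedge\bot/\psi]$; from $\Box\phi$ infer $\Box\phi[\psi\wedge\mathrm{NE}/\psi]\vee\Box\phi[\psi\wedge\bot/\psi]$. *)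

theory Defs
  imports Main
begin

datatype form =
    Atom nat
  | Neg form
  | Conj form form
  | Disj form form
  | Dia form
  | NE

fun classical :: "form \<Rightarrow> bool" where
  "classical (Atom p) = True"
| "classical (Neg f) = classical f"
| "classical (Conj f g) = (classical f \<and> classical g)"
| "classical (Disj f g) = (classical f \<and> classical g)"
| "classical (Dia f) = classical f"
| "classical NE = False"

definition Box :: "form \<Rightarrow> form" where
  "Box f = Neg (Dia (Neg f))"

definition Bot :: form where
  "Bot = Conj (Atom 0) (Neg (Atom 0))"

definition BotBot :: form where
  "BotBot = Conj Bot NE"

section \<open>Distributive occurrences: one-hole contexts built only from \<and> and \<or>\<close>

datatype ctx =
    Hole
  | CConjL ctx form
  | CConjR form ctx
  | CDisjL ctx form
  | CDisjR form ctx

fun plug :: "ctx \<Rightarrow> form \<Rightarrow> form" where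
  "plug Hole g = g"
| "plug (CConjL c f) g = Conj (plug c g) f"
| "plug (CConjR f c) g = Conj f (plug c g)"
| "plug (CDisjL c f) g = Disj (plug c g) f"
| "plug (CDisjR f c) g = Disj f (plug c g)"

section \<open>Semantics: Kripke models with W = UNIV of type 'w\<close>

record 'w kmodel =
  acc :: "'w \<Rightarrow> 'w \<Rightarrow> bool"
  val :: "nat \<Rightarrow> 'w set"

definition succs :: "'w kmodel \<Rightarrow> 'w \<Rightarrow> 'w set" where
  "succs M w = {v. acc M w v}"

text \<open>sem M True s f: s supports f;  sem M False s f: s antisupports f.\<close>
fun sem :: "'w kmodel \<Rightarrow> bool \<Rightarrow> 'w set \<Rightarrow> form \<Rightarrow> bool" where
  "sem M True s (Atom p) = (s \<subseteq> val M p)"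
| "sem M False s (Atom p) = (s \<inter> val M p = {})"
| "sem M True s NE = (s \<noteq> {})"
| "sem M False s NE = (s = {})"
| "sem M b s (Neg f) = sem M (\<not> b) s f"
| "sem M True s (Conj f g) = (sem M True s f \<and> sem M True s g)"
| "sem M False s (Conj f g) =
     (\<exists>t u. s = t \<union> u \<and> sem M False t f \<and> sem M False u g)"
| "sem M True s (Disj f g) =
     (\<exists>t u. s = t \<union> u \<and> sem M True t f \<and> sem M True u g)"
| "sem M False s (Disj f g) = (sem M False s f \<and> sem M False s g)"
| "sem M True s (Dia f) =
     (\<forall>w\<in>s. \<exists>t. t \<noteq> {} \<and> t \<subseteq> succs M w \<and> sem M True t f)"
| "sem M False s (Dia f) = (\<forall>w\<in>s. sem M False (succs M w) f)"

abbreviation supp :: "'w kmodel \<Rightarrow> 'w set \<Rightarrow> form \<Rightarrow> bool" where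
  "supp M s f \<equiv> sem M True s f"

abbreviation anti :: "'w kmodel \<Rightarrow> 'w set \<Rightarrow> form \<Rightarrow> bool" where
  "anti M s f \<equiv> sem M False s f"

text \<open>Entailment restricted to models over the type 'w; since 'w is arbitrary
  (universally quantified at theorem level), this covers all Kripke models.\<close>
definition entails :: "'w itself \<Rightarrow> form set \<Rightarrow> form \<Rightarrow> bool" where
  "entails _ Phi g \<longleftrightarrow>
     (\<forall>(M :: 'w kmodel) (s :: 'w set). (\<forall>f\<in>Phi. supp M s f) \<longrightarrow> supp M s g)"

text \<open>ded G f: there is a derivation of f all of whose undischarged assumptions
  are in G.  Side conditions "undischarged assumptions of the subderivation contain
  no NE" are rendered by requiring the subderivation's remaining assumption set D
  (a subset of G) to consist of classical formulas.\<close>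

definition NEfree :: "form set \<Rightarrow> bool" where
  "NEfree D \<longleftrightarrow> (\<forall>f\<in>D. classical f)"

inductive ded :: "form set \<Rightarrow> form \<Rightarrow> bool" where
  Assm: "f \<in> G \<Longrightarrow> ded G f"
| ConjI: "ded G f \<Longrightarrow> ded G g \<Longrightarrow> ded G (Conj f g)"
| ConjE1: "ded G (Conj f g) \<Longrightarrow> ded G f"
| ConjE2: "ded G (Conj f g) \<Longrightarrow> ded G g"
| NegI: "classical a \<Longrightarrow> NEfree D \<Longrightarrow> D \<subseteq> G \<Longrightarrow> ded (insert a D) Bot
          \<Longrightarrow> ded G (Neg a)"
| NegE: "classical a \<Longrightarrow> classical b \<Longrightarrow> ded G a \<Longrightarrow> ded G (Neg a) \<Longrightarrow> ded G b"
| DNegE: "ded G (Neg (Neg f)) \<Longrightarrow> ded G f"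
| DNegI: "ded G f \<Longrightarrow> ded G (Neg (Neg f))"
| DMConj1: "ded G (Neg (Conj f g)) \<Longrightarrow> ded G (Disj (Neg f) (Neg g))"
| DMConj2: "ded G (Disj (Neg f) (Neg g)) \<Longrightarrow> ded G (Neg (Conj f g))"
| DMDisj1: "ded G (Neg (Disj f g)) \<Longrightarrow> ded G (Conj (Neg f) (Neg g))"
| DMDisj2: "ded G (Conj (Neg f) (Neg g)) \<Longrightarrow> ded G (Neg (Disj f g))"
| NegNE1: "ded G (Neg NE) \<Longrightarrow> ded G Bot"
| NegNE2: "ded G Bot \<Longrightarrow> ded G (Neg NE)"
| DisjI: "classical g \<Longrightarrow> ded G f \<Longrightarrow> ded G (Disj f g)"
| DisjDup: "ded G f \<Longrightarrow> ded G (Disj f f)"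
| DisjComm: "ded G (Disj f g) \<Longrightarrow> ded G (Disj g f)"
| DisjE: "ded G (Disj f g) \<Longrightarrow> NEfree D1 \<Longrightarrow> NEfree D2 \<Longrightarrow> D1 \<subseteq> G \<Longrightarrow> D2 \<subseteq> G
          \<Longrightarrow> ded (insert f D1) h \<Longrightarrow> ded (insert g D2) h \<Longrightarrow> ded G h"
| DisjSub: "ded G (Disj f g) \<Longrightarrow> NEfree D \<Longrightarrow> D \<subseteq> G
          \<Longrightarrow> ded (insert g D) h \<Longrightarrow> ded G (Disj f h)"
| BotDisj: "ded G (Disj Bot f) \<Longrightarrow> ded G f"
| BotBotDisj: "ded G (Disj BotBot f) \<Longrightarrow> ded G g"
| DiaMon: "ded {f} g \<Longrightarrow> ded G (Dia f) \<Longrightarrow> ded G (Dia g)"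
| BoxMon: "ded (set fs) g \<Longrightarrow> (\<forall>f\<in>set fs. ded G (Box f)) \<Longrightarrow> ded G (Box g)"
| NegDiaBox1: "ded G (Neg (Dia f)) \<Longrightarrow> ded G (Box (Neg f))"
| NegDiaBox2: "ded G (Box (Neg f)) \<Longrightarrow> ded G (Neg (Dia f))"
| DiaSep: "ded G (Dia (Disj f (Conj g NE))) \<Longrightarrow> ded G (Dia g)"
| DiaJoin: "ded G (Dia f) \<Longrightarrow> ded G (Dia g) \<Longrightarrow> ded G (Dia (Disj f g))"
| BoxDia: "ded G (Box (Conj f NE)) \<Longrightarrow> ded G (Dia f)"
| BoxDiaJoin: "ded G (Box f) \<Longrightarrow> ded G (Dia g) \<Longrightarrow> ded G (Box (Disj f g))"
| Split: "ded G (plug c g) \<Longrightarrow> ded (insert (plug c (Conj g NE)) G) h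
          \<Longrightarrow> ded (insert (plug c (Conj g Bot)) G) h \<Longrightarrow> ded G h"
| DiaSplit: "ded G (Dia (plug c g)) \<Longrightarrow>
          ded G (Disj (Dia (plug c (Conj g NE))) (Dia (plug c (Conj g Bot))))"
| BoxSplit: "ded G (Box (plug c g)) \<Longrightarrow>
          ded G (Disj (Box (plug c (Conj g NE))) (Box (plug c (Conj g Bot))))"

end

theory Submission
  imports Defs
begin

lemma flat_aux:
  "classical f \<Longrightarrow> (\<forall>b s. sem M b s f = (\<forall>w\<in>s. sem M b {w} f))
      \<and> (\<forall>w. sem M True {w} f = (\<not> sem M False {w} f))"
proof (induction f)
  case (Atom p)
  show ?case
  proof (intro conjI allI)
    fix b s show "sem M b s (Atom p) = (\<forall>w\<in>s. sem M b {w} (Atom p))" by (cases b) auto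
  qed auto
next
  case (Neg f)
  have cf: "classical f" using Neg.prems by simp
  have F: "\<And>b s. sem M b s f = (\<forall>w\<in>s. sem M b {w} f)"
    and BF: "\<And>w. sem M True {w} f = (\<not> sem M False {w} f)" using Neg.IH[OF cf] by blast+
  show ?case
  proof (intro conjI allI)
    fix b s show "sem M b s (Neg f) = (\<forall>w\<in>s. sem M b {w} (Neg f))"
      by (simp only: sem.simps) (rule F)
  next
    fix w show "sem M True {w} (Neg f) = (\<not> sem M False {w} (Neg f))"
      by (simp only: sem.simps not_True_eq_False not_False_eq_True BF) blast
  qed
next
  case (Conj f g)
  have cf: "classical f" "classical g" using Conj.prems by simp_all
  have F: "\<And>b s. sem M b s f = (\<forall>w\<in>s. sem M b {w} f)"
    and G: "\<And>b s. sem M b s g = (\<forall>w\<in>s. sem M b {w} g)"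
    and BF: "\<And>w. sem M True {w} f = (\<not> sem M False {w} f)"
    and BG: "\<And>w. sem M True {w} g = (\<not> sem M False {w} g)"
    using Conj.IH(1)[OF cf(1)] Conj.IH(2)[OF cf(2)] by blast+
  have S: "sem M False {w} (Conj f g) = (sem M False {w} f \<or> sem M False {w} g)" for w
  proof
    assume "sem M False {w} (Conj f g)"
    then obtain t u where "{w} = t \<union> u" "sem M False t f" "sem M False u g" by auto
    moreover have "w \<in> t \<or> w \<in> u" using calculation(1) by auto
    ultimately show "sem M False {w} f \<or> sem M False {w} g" using F[of False t] G[of False u]
      by auto
  next
    assume "sem M False {w} f \<or> sem M False {w} g"
    moreover have "sem M False {} f" "sem M False {} g" using F[of False "{}"] G[of False "{}"] by auto
    ultimately show "sem M False {w} (Conj f g)"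
      by (simp only: sem.simps) (metis sup_bot.right_neutral sup_bot.left_neutral)
  qed
  have A: "sem M False s (Conj f g) = (\<forall>w\<in>s. sem M False {w} (Conj f g))" for s
  proof
    assume "sem M False s (Conj f g)"
    then obtain t u where "s = t \<union> u" "sem M False t f" "sem M False u g" by auto
    then show "\<forall>w\<in>s. sem M False {w} (Conj f g)" unfolding S using F[of False t] G[of False u] by auto
  next
    assume H: "\<forall>w\<in>s. sem M False {w} (Conj f g)"
    define t where "t = {w\<in>s. sem M False {w} f}"
    define u where "u = {w\<in>s. sem M False {w} g}"
    have "s = t \<union> u" using H unfolding S t_def u_def by auto
    moreover have "sem M False t f" using F[of False t] t_def by auto
    moreover have "sem M False u g" using G[of False u] u_def by auto
    ultimately show "sem M False s (Conj f g)" by auto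
  qed
  have B: "sem M True s (Conj f g) = (\<forall>w\<in>s. sem M True {w} (Conj f g))" for s
    unfolding sem.simps F[of True s] G[of True s] by blast
  have C: "sem M True {w} (Conj f g) = (\<not> sem M False {w} (Conj f g))" for w
    unfolding S using BF BG by auto
  show ?case
  proof (intro conjI allI)
    fix b s show "sem M b s (Conj f g) = (\<forall>w\<in>s. sem M b {w} (Conj f g))"
      using A[of s] B[of s] by (cases b) simp_all
  qed (rule C)
next
  case (Disj f g)
  have cf: "classical f" "classical g" using Disj.prems by simp_all
  have F: "\<And>b s. sem M b s f = (\<forall>w\<in>s. sem M b {w} f)"
    and G: "\<And>b s. sem M b s g = (\<forall>w\<in>s. sem M b {w} g)"
    and BF: "\<And>w. sem M True {w} f = (\<not> sem M False {w} f)"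
    and BG: "\<And>w. sem M True {w} g = (\<not> sem M False {w} g)"
    using Disj.IH(1)[OF cf(1)] Disj.IH(2)[OF cf(2)] by blast+
  have S: "sem M True {w} (Disj f g) = (sem M True {w} f \<or> sem M True {w} g)" for w
  proof
    assume "sem M True {w} (Disj f g)"
    then obtain t u where "{w} = t \<union> u" "sem M True t f" "sem M True u g" by auto
    moreover have "w \<in> t \<or> w \<in> u" using calculation(1) by auto
    ultimately show "sem M True {w} f \<or> sem M True {w} g" using F[of True t] G[of True u]
      by auto
  next
    assume "sem M True {w} f \<or> sem M True {w} g"
    moreover have "sem M True {} f" "sem M True {} g" using F[of True "{}"] G[of True "{}"] by auto
    ultimately show "sem M True {w} (Disj f g)"
      by (simp only: sem.simps) (metis sup_bot.right_neutral sup_bot.left_neutral)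
  qed
  have A: "sem M True s (Disj f g) = (\<forall>w\<in>s. sem M True {w} (Disj f g))" for s
  proof
    assume "sem M True s (Disj f g)"
    then obtain t u where "s = t \<union> u" "sem M True t f" "sem M True u g" by auto
    then show "\<forall>w\<in>s. sem M True {w} (Disj f g)" unfolding S using F[of True t] G[of True u] by auto
  next
    assume H: "\<forall>w\<in>s. sem M True {w} (Disj f g)"
    define t where "t = {w\<in>s. sem M True {w} f}"
    define u where "u = {w\<in>s. sem M True {w} g}"
    have "s = t \<union> u" using H unfolding S t_def u_def by auto
    moreover have "sem M True t f" using F[of True t] t_def by auto
    moreover have "sem M True u g" using G[of True u] u_def by auto
    ultimately show "sem M True s (Disj f g)" by auto
  qed
  have B: "sem M False s (Disj f g) = (\<forall>w\<in>s. sem M False {w} (Disj f g))" for s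
    unfolding sem.simps F[of False s] G[of False s] by blast
  have C: "sem M True {w} (Disj f g) = (\<not> sem M False {w} (Disj f g))" for w
    unfolding S using BF BG by auto
  show ?case
  proof (intro conjI allI)
    fix b s show "sem M b s (Disj f g) = (\<forall>w\<in>s. sem M b {w} (Disj f g))"
      using A[of s] B[of s] by (cases b) simp_all
  qed (rule C)
next
  case (Dia f)
  have cf: "classical f" using Dia.prems by simp
  have F: "\<And>b s. sem M b s f = (\<forall>w\<in>s. sem M b {w} f)"
    and BF: "\<And>w. sem M True {w} f = (\<not> sem M False {w} f)" using Dia.IH[OF cf] by blast+
  have A: "sem M b s (Dia f) = (\<forall>w\<in>s. sem M b {w} (Dia f))" for b s
    by (cases b) auto
  have C: "sem M True {w} (Dia f) = (\<not> sem M False {w} (Dia f))" for w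
  proof
    assume "sem M True {w} (Dia f)"
    then obtain t where "t \<noteq> {}" "t \<subseteq> succs M w" "sem M True t f" by auto
    then obtain v where "v \<in> succs M w" "sem M True {v} f" using F[of True t] by blast
    then show "\<not> sem M False {w} (Dia f)" using BF F[of False "succs M w"] by auto
  next
    assume "\<not> sem M False {w} (Dia f)"
    then obtain v where "v \<in> succs M w" "\<not> sem M False {v} f" using F[of False "succs M w"] by auto
    then have "sem M True {v} f" using BF by auto
    then show "sem M True {w} (Dia f)" using \<open>v \<in> succs M w\<close> by auto
  qed
  show ?case using A C by blast
next
  case NE
  then show ?case by simp
qed

lemma flat: assumes "classical f" shows "sem M b s f = (\<forall>w\<in>s. sem M b {w} f)"
proof -
  have H: "\<forall>b s. sem M b s f = (\<forall>w\<in>s. sem M b {w} f)"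
    using flat_aux[OF assms] by (rule conjunct1)
  show ?thesis using H[rule_format, of b s] .
qed

lemma biv: assumes "classical f" shows "sem M True {w} f = (\<not> sem M False {w} f)"
proof -
  have H: "\<forall>w. sem M True {w} f = (\<not> sem M False {w} f)"
    using flat_aux[OF assms] by (rule conjunct2)
  show ?thesis using H[rule_format, of w] .
qed

lemma down: assumes "classical f" "sem M b s f" "t \<subseteq> s" shows "sem M b t f"
proof -
  have "\<forall>w\<in>s. sem M b {w} f" using flat[OF assms(1), of M b s] assms(2) by simp
  then have "\<forall>w\<in>t. sem M b {w} f" using assms(3) by auto
  then show ?thesis using flat[OF assms(1), of M b t] by simp
qed

lemma union_closed: "sem M b s f \<Longrightarrow> sem M b t f \<Longrightarrow> sem M b (s \<union> t) f"
proof (induction f arbitrary: b s t)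
  case (Conj f g)
  then show ?case
  proof (cases b)
    case False
    with Conj obtain s1 s2 t1 t2 where "s = s1 \<union> s2" "t = t1 \<union> t2"
      "sem M False s1 f" "sem M False s2 g" "sem M False t1 f" "sem M False t2 g" by auto
    moreover have "s \<union> t = (s1 \<union> t1) \<union> (s2 \<union> t2)" using calculation by auto
    ultimately show ?thesis using Conj.IH False
      by (simp only: sem.simps) (metis (full_types))
  qed auto
next
  case (Disj f g)
  then show ?case
  proof (cases b)
    case True
    with Disj obtain s1 s2 t1 t2 where "s = s1 \<union> s2" "t = t1 \<union> t2"
      "sem M True s1 f" "sem M True s2 g" "sem M True t1 f" "sem M True t2 g" by auto
    moreover have "s \<union> t = (s1 \<union> t1) \<union> (s2 \<union> t2)" using calculation by auto
    ultimately show ?thesis using Disj.IH True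
      by (simp only: sem.simps) (metis (full_types))
  qed auto
next
  case (Dia f)
  then show ?case by (cases b) auto
next
  case (Atom p)
  then show ?case by (cases b) auto
next
  case NE
  then show ?case by (cases b) auto
qed auto

lemma Bot_sem: "sem M True s Bot = (s = {})"
  unfolding Bot_def by auto

lemma Box_sem: "sem M True s (Box f) = (\<forall>w\<in>s. sem M True (succs M w) f)"
  unfolding Box_def by auto

lemma split_sem: "sem M True s (plug c g) \<Longrightarrow>
   sem M True s (plug c (Conj g NE)) \<or> sem M True s (plug c (Conj g Bot))"
proof (induction c arbitrary: s)
  case Hole
  then show ?case using Bot_sem by auto
next
  case (CConjL c f)
  then show ?case by auto
next
  case (CConjR f c)
  then show ?case by auto
next
  case (CDisjL c f)
  then obtain t u where "s = t \<union> u" "sem M True t (plug c g)" "sem M True u f" by auto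
  then show ?case using CDisjL.IH[of t] by (simp only: plug.simps sem.simps) blast
next
  case (CDisjR f c)
  then obtain t u where "s = t \<union> u" "sem M True u (plug c g)" "sem M True t f" by auto
  then show ?case using CDisjR.IH[of u] by (simp only: plug.simps sem.simps) blast
qed

lemma Dia_sem: "sem M True s (Dia f) = (\<forall>w\<in>s. \<exists>t. t \<noteq> {} \<and> t \<subseteq> succs M w \<and> sem M True t f)"
  by simp

lemma Disj_sem: "sem M True s (Disj f g) = (\<exists>t u. s = t \<union> u \<and> sem M True t f \<and> sem M True u g)"
  by simp

lemma sound: "ded G f \<Longrightarrow> \<forall>s. (\<forall>x\<in>G. sem M True s x) \<longrightarrow> sem M True s f"
proof (induction rule: ded.induct)
  case (NegI a D G)
  show ?case
  proof (intro allI impI)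
    fix s assume sG: "\<forall>x\<in>G. sem M True s x"
    have "\<forall>w\<in>s. sem M False {w} a"
    proof
      fix w assume "w \<in> s"
      have "\<forall>x\<in>D. sem M True {w} x"
        using NegI.hyps(2,3) sG \<open>w \<in> s\<close> unfolding NEfree_def
        by (meson down empty_subsetI insert_subset subsetD)
      moreover have "\<not> sem M True {w} Bot" using Bot_sem[of M "{w}"] by simp
      ultimately have "\<not> sem M True {w} a" using NegI.IH by auto
      then show "sem M False {w} a" using biv[OF NegI.hyps(1), of M w] by blast
    qed
    then show "sem M True s (Neg a)" using flat[OF NegI.hyps(1), of M False s] by simp
  qed
next
  case (NegE a b G)
  show ?case
  proof (intro allI impI)
    fix s assume sG: "\<forall>x\<in>G. sem M True s x"
    then have "sem M True s a" "sem M False s a" using NegE.IH by auto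
    then have A1: "\<forall>w\<in>s. sem M True {w} a" and A2: "\<forall>w\<in>s. sem M False {w} a"
      using flat[OF NegE.hyps(1), of M True s] flat[OF NegE.hyps(1), of M False s] by simp_all
    have "s = {}"
    proof (rule ccontr)
      assume "s \<noteq> {}"
      then obtain w where "w \<in> s" by blast
      then show False using A1 A2 biv[OF NegE.hyps(1), of M w] by blast
    qed
    then show "sem M True s b" using flat[OF NegE.hyps(2), of M True s] by simp
  qed
next
  case (DisjE G f g D1 D2 h)
  show ?case
  proof (intro allI impI)
    fix s assume sG: "\<forall>x\<in>G. sem M True s x"
    then obtain t u where tu: "s = t \<union> u" "sem M True t f" "sem M True u g" using DisjE.IH(1) by auto
    have "\<forall>x\<in>D1. sem M True t x" using DisjE.hyps(2,4) sG tu(1) unfolding NEfree_def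
      by (meson Un_upper1 down subsetD)
    then have "sem M True t h" using DisjE.IH(2) tu by auto
    moreover have "\<forall>x\<in>D2. sem M True u x" using DisjE.hyps(3,5) sG tu(1) unfolding NEfree_def
      by (meson Un_upper2 down subsetD)
    then have "sem M True u h" using DisjE.IH(3) tu by auto
    ultimately show "sem M True s h" using tu(1) union_closed by blast
  qed
next
  case (DisjSub G f g D h)
  show ?case
  proof (intro allI impI)
    fix s assume sG: "\<forall>x\<in>G. sem M True s x"
    then obtain t u where tu: "s = t \<union> u" "sem M True t f" "sem M True u g" using DisjSub.IH(1) by auto
    have "\<forall>x\<in>D. sem M True u x" using DisjSub.hyps(2,3) sG tu(1) unfolding NEfree_def
      by (meson Un_upper2 down subsetD)
    then have "sem M True u h" using DisjSub.IH(2) tu by auto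
    then show "sem M True s (Disj f h)" using tu by auto
  qed
next
  case (DisjI g G f)
  have "sem M True {} g" using flat[OF DisjI.hyps(1), of M True "{}"] by simp
  then show ?case using DisjI.IH by (simp only: sem.simps) (metis sup_bot.right_neutral)
next
  case (DisjDup G f)
  then show ?case by (simp only: sem.simps) (metis sup.idem)
next
  case (DisjComm G f g)
  then show ?case by (metis sem.simps(8) sup_commute)
next
  case (BotDisj G f)
  then show ?case by (simp only: Bot_sem sem.simps) (metis sup_bot.left_neutral)
next
  case (BotBotDisj G f g)
  then show ?case unfolding BotBot_def by (simp only: Bot_sem sem.simps) blast
next
  case (DiaMon f g G)
  then show ?case by (simp only: sem.simps) (metis singletonD)
next
  case (BoxMon fs g G)
  then show ?case unfolding Box_sem by auto
next
  case (NegDiaBox1 G f)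
  then show ?case unfolding Box_def by auto
next
  case (NegDiaBox2 G f)
  then show ?case unfolding Box_def by auto
next
  case (DiaSep G f g)
  show ?case
  proof (intro allI impI)
    fix s assume "\<forall>x\<in>G. sem M True s x"
    then have H: "sem M True s (Dia (Disj f (Conj g NE)))" using DiaSep.IH by blast
    show "sem M True s (Dia g)"
      unfolding Dia_sem
    proof (intro ballI)
      fix w assume "w \<in> s"
      have "\<exists>t. t \<noteq> {} \<and> t \<subseteq> succs M w \<and> sem M True t (Disj f (Conj g NE))"
        using H[unfolded Dia_sem] \<open>w \<in> s\<close> by (rule bspec)
      then obtain t where t: "t \<noteq> {}" "t \<subseteq> succs M w" "sem M True t (Disj f (Conj g NE))"
        by blast
      have "\<exists>t1 t2. t = t1 \<union> t2 \<and> sem M True t1 f \<and> sem M True t2 (Conj g NE)"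
        using t(3) by (simp only: Disj_sem)
      then obtain t1 t2 where tt: "t = t1 \<union> t2" "sem M True t2 (Conj g NE)"
        by blast
      then have "sem M True t2 g" "t2 \<noteq> {}" by simp_all
      moreover have "t2 \<subseteq> succs M w" using tt(1) t(2) by blast
      ultimately show "\<exists>t. t \<noteq> {} \<and> t \<subseteq> succs M w \<and> sem M True t g"
        by (intro exI[of _ t2] conjI)
    qed
  qed
next
  case (DiaJoin G f g)
  show ?case
  proof (intro allI impI)
    fix s assume "\<forall>x\<in>G. sem M True s x"
    then have H1: "sem M True s (Dia f)" and H2: "sem M True s (Dia g)" using DiaJoin.IH by blast+
    show "sem M True s (Dia (Disj f g))"
      unfolding Dia_sem
    proof (intro ballI)
      fix w assume "w \<in> s"
      have "\<exists>t. t \<noteq> {} \<and> t \<subseteq> succs M w \<and> sem M True t f"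
        using H1[unfolded Dia_sem] \<open>w \<in> s\<close> by (rule bspec)
      then obtain t1 where t1: "t1 \<noteq> {}" "t1 \<subseteq> succs M w" "sem M True t1 f" by blast
      have "\<exists>t. t \<noteq> {} \<and> t \<subseteq> succs M w \<and> sem M True t g"
        using H2[unfolded Dia_sem] \<open>w \<in> s\<close> by (rule bspec)
      then obtain t2 where t2: "t2 \<subseteq> succs M w" "sem M True t2 g" by blast
      have "sem M True (t1 \<union> t2) (Disj f g)"
        unfolding Disj_sem using t1(3) t2(2) by blast
      moreover have "t1 \<union> t2 \<noteq> {}" using t1(1) by blast
      moreover have "t1 \<union> t2 \<subseteq> succs M w" using t1(2) t2(1) by blast
      ultimately show "\<exists>t. t \<noteq> {} \<and> t \<subseteq> succs M w \<and> sem M True t (Disj f g)"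
        by (intro exI[of _ "t1 \<union> t2"] conjI)
    qed
  qed
next
  case (BoxDia G f)
  show ?case
  proof (intro allI impI)
    fix s assume "\<forall>x\<in>G. sem M True s x"
    then have H: "\<forall>w\<in>s. sem M True (succs M w) (Conj f NE)" using BoxDia.IH unfolding Box_sem by blast
    show "sem M True s (Dia f)" unfolding Dia_sem
    proof (intro ballI)
      fix w assume "w \<in> s"
      then have "sem M True (succs M w) (Conj f NE)" using H by blast
      then have "succs M w \<noteq> {}" "sem M True (succs M w) f" by simp_all
      then show "\<exists>t. t \<noteq> {} \<and> t \<subseteq> succs M w \<and> sem M True t f"
        by (intro exI[of _ "succs M w"] conjI) simp_all
    qed
  qed
next
  case (BoxDiaJoin G f g)
  show ?case
  proof (intro allI impI)
    fix s assume "\<forall>x\<in>G. sem M True s x"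
    then have H1: "sem M True s (Box f)" and H2: "sem M True s (Dia g)" using BoxDiaJoin.IH by auto
    show "sem M True s (Box (Disj f g))" unfolding Box_sem
    proof
      fix w assume "w \<in> s"
      have "\<exists>t. t \<noteq> {} \<and> t \<subseteq> succs M w \<and> sem M True t g"
        using H2[unfolded Dia_sem] \<open>w \<in> s\<close> by (rule bspec)
      then obtain t where t: "t \<subseteq> succs M w" "sem M True t g" by blast
      have f: "sem M True (succs M w) f" using H1[unfolded Box_sem] \<open>w \<in> s\<close> by (rule bspec)
      have "succs M w = succs M w \<union> t" using t(1) by blast
      then show "sem M True (succs M w) (Disj f g)"
        unfolding Disj_sem using f t(2) by blast
    qed
  qed
next
  case (Split G c g h)
  then show ?case using split_sem by blast
next
  case (DiaSplit G c g)
  show ?case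
  proof (intro allI impI)
    fix s assume "\<forall>x\<in>G. sem M True s x"
    then have H: "sem M True s (Dia (plug c g))" using DiaSplit.IH by auto
    define t where "t = {w\<in>s. sem M True {w} (Dia (plug c (Conj g NE)))}"
    define u where "u = {w\<in>s. sem M True {w} (Dia (plug c (Conj g Bot)))}"
    have "s = t \<union> u"
    proof
      show "s \<subseteq> t \<union> u"
      proof
        fix w assume "w \<in> s"
        have "\<exists>t. t \<noteq> {} \<and> t \<subseteq> succs M w \<and> sem M True t (plug c g)"
          using H[unfolded Dia_sem] \<open>w \<in> s\<close> by (rule bspec)
        then obtain t' where t': "t' \<noteq> {}" "t' \<subseteq> succs M w" "sem M True t' (plug c g)" by blast
        have D: "sem M True {w} (Dia X)" if "sem M True t' X" for X
          unfolding Dia_sem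
        proof (intro ballI)
          fix v assume "v \<in> {w}"
          then have "v = w" by simp
          then show "\<exists>t. t \<noteq> {} \<and> t \<subseteq> succs M v \<and> sem M True t X"
            using t'(1,2) that by blast
        qed
        have "sem M True {w} (Dia (plug c (Conj g NE))) \<or> sem M True {w} (Dia (plug c (Conj g Bot)))"
          using split_sem[OF t'(3)] D by blast
        then show "w \<in> t \<union> u" using \<open>w \<in> s\<close> unfolding t_def u_def by blast
      qed
    qed (unfold t_def u_def, blast)
    moreover have "sem M True t (Dia (plug c (Conj g NE)))" unfolding t_def by auto
    moreover have "sem M True u (Dia (plug c (Conj g Bot)))" unfolding u_def by auto
    ultimately show "sem M True s (Disj (Dia (plug c (Conj g NE))) (Dia (plug c (Conj g Bot))))"
      by (simp only: sem.simps) blast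
  qed
next
  case (BoxSplit G c g)
  show ?case
  proof (intro allI impI)
    fix s assume "\<forall>x\<in>G. sem M True s x"
    then have H: "sem M True s (Box (plug c g))" using BoxSplit.IH by auto
    define t where "t = {w\<in>s. sem M True (succs M w) (plug c (Conj g NE))}"
    define u where "u = {w\<in>s. sem M True (succs M w) (plug c (Conj g Bot))}"
    have "s = t \<union> u" using H split_sem unfolding Box_sem t_def u_def by blast
    moreover have "sem M True t (Box (plug c (Conj g NE)))" unfolding t_def Box_sem by auto
    moreover have "sem M True u (Box (plug c (Conj g Bot)))" unfolding u_def Box_sem by auto
    ultimately show "sem M True s (Disj (Box (plug c (Conj g NE))) (Box (plug c (Conj g Bot))))"
      by (simp only: sem.simps) blast
  qed
next
  case (Assm f G) then show ?case by blast
next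
  case (ConjI G f g) then show ?case by simp
next
  case (ConjE1 G f g) then show ?case by simp
next
  case (ConjE2 G f g) then show ?case by simp
next
  case (DNegE G f) then show ?case by simp
next
  case (DNegI G f) then show ?case by simp
next
  case (DMConj1 G f g) then show ?case by simp
next
  case (DMConj2 G f g) then show ?case by simp
next
  case (DMDisj1 G f g) then show ?case by simp
next
  case (DMDisj2 G f g) then show ?case by simp
next
  case (NegNE1 G) then show ?case by (simp add: Bot_sem)
next
  case (NegNE2 G) then show ?case by (simp add: Bot_sem)
qed

theorem theorem4p34:
  fixes Phi :: "form set" and psi :: form
  assumes "ded Phi psi"
  shows "entails TYPE('w) Phi psi"
  unfolding entails_def using sound[OF assms] by blast

end
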